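(* Let $\gamma>0$ and let $\mu$ be a distribution on $\mathbb{R}$ with $\bar\mu(x)>0$ for all $x\in\mathbb{R}$. For $c>0$ let $f_c(x):=c_1^{-1}e^{-\gamma x}(1-x/c)1_{[0,c)}(x)$, where $c_1:=\int_0^c e^{-\gamma x}(1-x/c)\,dx$, and let $\mu_c:=(f_c(x)\,dx)*\mu$. Then: (i) For each fixed $c>0$: $\widehat\mu(\gamma)<\infty$ and $\widehat\mu(\gamma+iz)\ne0$ for every $z\in\mathbb{R}$ if and only if $\widehat{\mu_c}(\gamma)<\infty$ and $\widehat{\mu_c}(\gamma+iz)\ne0$ for every $z\in\mathbb{R}$. (ii) For each $n\in\mathbb{N}$: $\mu^{n*}\in\mathcal{S}(\gamma)$ if and only if $\mu_c^{n*}\in\mathcal{S}(\gamma)$ for every $c>0$.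
   Context: For a probability distribution $\rho$ on $\mathbb{R}$: $\bar\rho(x):=\rho((x,\infty))$, $\rho^{n*}$ is the $n$-th convolution power, $\widehat\rho(\gamma):=\int e^{\gamma x}\rho(dx)$ and, when finite, $\widehat\rho(\gamma+iz):=\int e^{(\gamma+iz)x}\rho(dx)$. $f\sim g$ means $f(x)/g(x)\to1$ as $x\to\infty$. For $\gamma\ge0$: $\rho\in\mathcal{L}(\gamma)$ if $\bar\rho(x)>0$ for all $x$ and $\bar\rho(x+a)\sim e^{-\gamma a}\bar\rho(x)$ for every $a\in\mathbb{R}$; $\rho\in\mathcal{S}(\gamma)$ if $\rho\in\mathcal{L}(\gamma)$, $\widehat\rho(\gamma)<\infty$ and $\overline{\rho^{2*}}(x)\sim2\widehat\rho(\gamma)\bar\rho(x)$. *)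

theory Defs
  imports "HOL-Probability.Probability" "HOL-Probability.Convolution" "HOL-Library.Landau_Symbols"
begin

definition distr_on_R :: "real measure \<Rightarrow> bool" where
  "distr_on_R M \<longleftrightarrow> prob_space M \<and> sets M = sets borel"

definition tail :: "real measure \<Rightarrow> real \<Rightarrow> real" where
  "tail M x = measure M {x<..}"

primrec conv_pow :: "real measure \<Rightarrow> nat \<Rightarrow> real measure" where
  "conv_pow M 0 = return borel 0"
| "conv_pow M (Suc n) = (M \<star> conv_pow M n)"

definition mgf_hat :: "real measure \<Rightarrow> real \<Rightarrow> ennreal" where
  "mgf_hat M g = (\<integral>\<^sup>+ x. ennreal (exp (g * x)) \<partial>M)"

definition cmgf_hat :: "real measure \<Rightarrow> real \<Rightarrow> real \<Rightarrow> complex" where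
  "cmgf_hat M g z = (CLINT x|M. exp (Complex g z * complex_of_real x))"

definition class_L :: "real \<Rightarrow> real measure \<Rightarrow> bool" where
  "class_L g M \<longleftrightarrow> (\<forall>x. tail M x > 0) \<and>
     (\<forall>a. (\<lambda>x. tail M (x + a)) \<sim>[at_top] (\<lambda>x. exp (- g * a) * tail M x))"

definition class_S :: "real \<Rightarrow> real measure \<Rightarrow> bool" where
  "class_S g M \<longleftrightarrow> class_L g M \<and> mgf_hat M g < \<infinity> \<and>
     (\<lambda>x. tail (M \<star> M) x) \<sim>[at_top] (\<lambda>x. 2 * enn2real (mgf_hat M g) * tail M x)"

definition c_one :: "real \<Rightarrow> real \<Rightarrow> real" where
  "c_one g c = (LBINT x:{0..c}. exp (- g * x) * (1 - x / c))"

definition f_c :: "real \<Rightarrow> real \<Rightarrow> real \<Rightarrow> real" where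
  "f_c g c x = indicator {0..<c} x * exp (- g * x) * (1 - x / c) / c_one g c"

definition mu_c :: "real \<Rightarrow> real \<Rightarrow> real measure \<Rightarrow> real measure" where
  "mu_c g c M = (density lborel (\<lambda>x. ennreal (f_c g c x)) \<star> M)"

end

theory Submission
  imports Defs
begin


lemma conv_prob:
  fixes M N :: "real measure"
  assumes "prob_space M" "prob_space N" and [measurable_cong]: "sets M = sets borel" "sets N = sets borel"
  shows "prob_space (M \<star> N)"
proof -
  interpret M: prob_space M by fact
  interpret N: prob_space N by fact
  interpret pair_prob_space M N ..
  show ?thesis unfolding convolution_def by (rule prob_space_distr) simp
qed

lemma conv_return0:
  fixes M :: "real measure"
  assumes "finite_measure M" "sets M = sets borel"
  shows "M \<star> return borel 0 = M"
proof (rule measure_eqI)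
  show "sets (M \<star> return borel 0) = sets M" using assms by simp
  fix A assume "A \<in> sets (M \<star> return borel 0)"
  then have A[measurable]: "A \<in> sets borel" by simp
  have fin: "finite_measure (return borel (0::real))"
    by (simp add: prob_space_return prob_space.finite_measure)
  have "emeasure (M \<star> return borel 0) A = \<integral>\<^sup>+x. \<integral>\<^sup>+y. indicator A (x + y) \<partial>return borel 0 \<partial>M"
    using convolution_emeasure'[OF A assms(1) fin] assms by simp
  also have "\<dots> = \<integral>\<^sup>+x. indicator A x \<partial>M"
    by (intro nn_integral_cong) (simp add: nn_integral_return)
  also have "\<dots> = emeasure M A" using assms by simp
  finally show "emeasure (M \<star> return borel 0) A = emeasure M A" .
qed

lemma conv_pow_prob:
  assumes "prob_space M" "sets M = sets borel"
  shows "prob_space (conv_pow M n) \<and> sets (conv_pow M n) = sets borel"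
  by (induction n) (auto simp: prob_space_return assms conv_prob)

lemma conv_swap4:
  fixes A B C D :: "real measure"
  assumes "finite_measure A" "finite_measure B" "finite_measure C" "finite_measure D"
    "sets A = sets borel" "sets B = sets borel" "sets C = sets borel" "sets D = sets borel"
  shows "((A \<star> B) \<star> (C \<star> D)) = ((A \<star> C) \<star> (B \<star> D))"
proof -
  have f: "finite_measure (X \<star> Y)" if "finite_measure X" "finite_measure Y" "sets X = sets borel" "sets Y = sets borel" for X Y :: "real measure"
    using that by (intro convolution_finite) auto
  have "((A \<star> B) \<star> (C \<star> D)) = (A \<star> (B \<star> (C \<star> D)))"
    using assms f[of C D] by (intro convolution_associative[symmetric]) auto
  also have "(B \<star> (C \<star> D)) = ((B \<star> C) \<star> D)"
    using assms by (intro convolution_associative) auto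
  also have "(B \<star> C) = (C \<star> B)"
    by (rule convolution_commutative[OF assms(2,3) assms(7,6)])
  also have "((C \<star> B) \<star> D) = (C \<star> (B \<star> D))"
    using assms by (intro convolution_associative[symmetric]) auto
  also have "(A \<star> (C \<star> (B \<star> D))) = ((A \<star> C) \<star> (B \<star> D))"
    using assms f[of B D] by (intro convolution_associative) auto
  finally show ?thesis .
qed

lemma conv_pow_conv:
  assumes "prob_space F" "sets F = sets borel" "prob_space M" "sets M = sets borel"
  shows "conv_pow (F \<star> M) n = (conv_pow F n \<star> conv_pow M n)"
proof (induction n)
  case 0
  have "finite_measure (return borel (0::real))"
    by (simp add: prob_space_return prob_space.finite_measure)
  then show ?case by (simp add: conv_return0)
next
  case (Suc n)
  have pF: "prob_space (conv_pow F n)" "sets (conv_pow F n) = sets borel"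
    using conv_pow_prob[OF assms(1,2)] by auto
  have pM: "prob_space (conv_pow M n)" "sets (conv_pow M n) = sets borel"
    using conv_pow_prob[OF assms(3,4)] by auto
  show ?case using Suc assms pF pM
    by (simp, intro conv_swap4) (auto simp: prob_space.finite_measure)
qed


lemma tail_antimono:
  fixes M :: "real measure"
  assumes "finite_measure M" "sets M = sets borel" "x \<le> y"
  shows "tail M y \<le> tail M x"
  unfolding tail_def using assms
  by (intro finite_measure.finite_measure_mono) auto

lemma tail_nonneg: "0 \<le> tail M x"
  unfolding tail_def by simp

lemma tail_le1:
  assumes "prob_space M" "sets M = sets borel"
  shows "tail M x \<le> 1"
  unfolding tail_def using assms by (simp add: prob_space.prob_le_1)

lemma tail_measurable:
  fixes M :: "real measure"
  assumes "finite_measure M" "sets M = sets borel"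
  shows "tail M \<in> borel_measurable borel"
proof -
  have "mono (\<lambda>x. - tail M x)"
    using tail_antimono[OF assms] by (auto simp: mono_def)
  then have "(\<lambda>x. - tail M x) \<in> borel_measurable borel"
    by (rule borel_measurable_mono)
  then have "(\<lambda>x. - (- tail M x)) \<in> borel_measurable borel"
    by measurable
  then show ?thesis by simp
qed

lemma tail_conv:
  fixes G H :: "real measure"
  assumes G: "finite_measure G" and H: "finite_measure H"
    and sG: "sets G = sets borel" and sH: "sets H = sets borel"
  shows "tail (G \<star> H) x = (\<integral>y. tail H (x - y) \<partial>G)"
proof -
  have fGH: "finite_measure (G \<star> H)" using assms by (intro convolution_finite) auto
  have spH: "space H = space borel" using sets_eq_imp_space_eq[OF sH] .
  have spG: "space G = space borel" using sets_eq_imp_space_eq[OF sG] .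
  have meas: "(\<lambda>y. tail H (x - y)) \<in> borel_measurable G"
    using tail_measurable[OF H sH] by (simp add: measurable_cong_sets[OF sG refl])
  have int: "integrable G (\<lambda>y. tail H (x - y))"
  proof (rule finite_measure.integrable_const_bound[OF G _ meas])
    show "AE y in G. norm (tail H (x - y)) \<le> measure H (space H)"
      by (auto simp: tail_def intro!: finite_measure.bounded_measure[OF H])
  qed
  have "emeasure (G \<star> H) {x<..} = \<integral>\<^sup>+y. emeasure H {a. a + y \<in> {x<..}} \<partial>G"
    using assms spH spG by (intro convolution_emeasure) auto
  also have "\<dots> = \<integral>\<^sup>+y. ennreal (tail H (x - y)) \<partial>G"
  proof (intro nn_integral_cong)
    fix y
    have "{a. a + y \<in> {x<..}} = {x - y<..}" by auto
    then show "emeasure H {a. a + y \<in> {x<..}} = ennreal (tail H (x - y))"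
      by (simp add: tail_def finite_measure.emeasure_eq_measure[OF H])
  qed
  also have "\<dots> = ennreal (\<integral>y. tail H (x - y) \<partial>G)"
    by (intro nn_integral_eq_integral int) (simp add: tail_nonneg)
  finally have "emeasure (G \<star> H) {x<..} = ennreal (\<integral>y. tail H (x - y) \<partial>G)" .
  moreover have "0 \<le> (\<integral>y. tail H (x - y) \<partial>G)"
    by (intro integral_nonneg_AE) (simp add: tail_nonneg)
  ultimately show ?thesis
    unfolding tail_def using fGH by (simp add: finite_measure.emeasure_eq_measure)
qed

lemma conv_supp:
  fixes G H :: "real measure"
  assumes G: "finite_measure G" and H: "finite_measure H"
    and sG[measurable_cong]: "sets G = sets borel" and sH[measurable_cong]: "sets H = sets borel"
    and aG: "AE x in G. x \<in> {0..a}" and aH: "AE y in H. y \<in> {0..b}"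
  shows "AE z in G \<star> H. z \<in> {0..a+b}"
proof -
  interpret G: finite_measure G by fact
  interpret H: finite_measure H by fact
  interpret pair_sigma_finite G H ..
  have "AE p in G \<Otimes>\<^sub>M H. fst p + snd p \<in> {0..a+b}"
  proof (rule AE_pair_measure)
    show "{p \<in> space (G \<Otimes>\<^sub>M H). fst p + snd p \<in> {0..a+b}} \<in> sets (G \<Otimes>\<^sub>M H)"
      by measurable
    show "AE x in G. AE y in H. fst (x, y) + snd (x, y) \<in> {0..a + b}"
      using aG by (rule eventually_mono) (rule eventually_mono[OF aH]; auto)
  qed
  then show ?thesis
    unfolding convolution_def
    by (subst AE_distr_iff) (auto simp: case_prod_beta)
qed

lemma conv_pow_supp:
  fixes F :: "real measure"
  assumes "prob_space F" "sets F = sets borel" "AE x in F. x \<in> {0..c}"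
  shows "AE x in conv_pow F n. x \<in> {0..real n * c}"
proof (induction n)
  case 0
  show ?case unfolding conv_pow.simps by (subst AE_return) auto
next
  case (Suc n)
  have p: "prob_space (conv_pow F n)" "sets (conv_pow F n) = sets borel"
    using conv_pow_prob[OF assms(1,2)] by auto
  have "AE x in F \<star> conv_pow F n. x \<in> {0..c + real n * c}"
    using assms p Suc by (intro conv_supp) (auto simp: prob_space.finite_measure)
  then show ?case unfolding conv_pow.simps by (simp add: algebra_simps)
qed

lemma tail_sandwich:
  fixes G H :: "real measure"
  assumes G: "prob_space G" and H: "prob_space H"
    and sG: "sets G = sets borel" and sH: "sets H = sets borel"
    and aG: "AE y in G. y \<in> {0..K}"
  shows "tail H x \<le> tail (G \<star> H) x" "tail (G \<star> H) x \<le> tail H (x - K)"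
proof -
  have fG: "finite_measure G" and fH: "finite_measure H"
    using G H by (auto simp: prob_space.finite_measure)
  have meas: "(\<lambda>y. tail H (x - y)) \<in> borel_measurable G"
    using tail_measurable[OF fH sH] by (simp add: measurable_cong_sets[OF sG refl])
  have int: "integrable G (\<lambda>y. tail H (x - y))"
  proof (rule finite_measure.integrable_const_bound[OF fG _ meas])
    show "AE y in G. norm (tail H (x - y)) \<le> 1"
      using tail_le1[OF H sH] by (simp add: tail_nonneg)
  qed
  have ic: "integrable G (\<lambda>y. t)" for t :: real
    using finite_measure.integrable_const[OF fG] .
  have c: "(\<integral>y. t \<partial>G) = t" for t :: real
    using prob_space.prob_space[OF G] by simp
  have "(\<integral>y. tail H x \<partial>G) \<le> (\<integral>y. tail H (x - y) \<partial>G)"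
    using int ic by (intro integral_mono_AE) (auto intro: eventually_mono[OF aG] intro!: tail_antimono[OF fH sH])
  then show "tail H x \<le> tail (G \<star> H) x"
    by (simp add: tail_conv[OF fG fH sG sH] prob_space.prob_space[OF G])
  have "(\<integral>y. tail H (x - y) \<partial>G) \<le> (\<integral>y. tail H (x - K) \<partial>G)"
    using int ic by (intro integral_mono_AE) (auto intro: eventually_mono[OF aG] intro!: tail_antimono[OF fH sH])
  then show "tail (G \<star> H) x \<le> tail H (x - K)"
    by (simp add: tail_conv[OF fG fH sG sH] prob_space.prob_space[OF G])
qed

lemma mgf_conv:
  fixes G H :: "real measure"
  assumes G: "finite_measure G" and H: "finite_measure H"
    and sG[measurable_cong]: "sets G = sets borel" and sH[measurable_cong]: "sets H = sets borel"
  shows "mgf_hat (G \<star> H) g = mgf_hat G g * mgf_hat H g"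
proof -
  have "mgf_hat (G \<star> H) g = (\<integral>\<^sup>+x. \<integral>\<^sup>+y. ennreal (exp (g * (x + y))) \<partial>H \<partial>G)"
    unfolding mgf_hat_def using assms by (intro nn_integral_convolution) auto
  also have "\<dots> = (\<integral>\<^sup>+x. ennreal (exp (g * x)) * mgf_hat H g \<partial>G)"
    unfolding mgf_hat_def
    by (intro nn_integral_cong, subst nn_integral_cmult[symmetric])
       (auto simp: distrib_left exp_add ennreal_mult)
  also have "\<dots> = mgf_hat G g * mgf_hat H g"
    unfolding mgf_hat_def by (subst nn_integral_multc) auto
  finally show ?thesis .
qed

lemma mgf_bounds:
  fixes G :: "real measure"
  assumes G: "prob_space G" and sG[measurable_cong]: "sets G = sets borel"
    and aG: "AE y in G. y \<in> {0..K}" and g: "0 \<le> g"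
  shows "1 \<le> mgf_hat G g" "mgf_hat G g \<le> ennreal (exp (g * K))"
proof -
  have e1: "emeasure G (space G) = 1" using prob_space.emeasure_space_1[OF G] .
  have "(\<integral>\<^sup>+x. 1 \<partial>G) \<le> mgf_hat G g"
    unfolding mgf_hat_def using aG g
    by (intro nn_integral_mono_AE) (auto elim!: eventually_mono)
  then show "1 \<le> mgf_hat G g" using e1 by simp
  have "AE x in G. ennreal (exp (g * x)) \<le> ennreal (exp (g * K))"
    using aG by (rule eventually_mono) (use g in \<open>auto intro!: ennreal_leI mult_left_mono\<close>)
  then have "mgf_hat G g \<le> (\<integral>\<^sup>+x. ennreal (exp (g * K)) \<partial>G)"
    unfolding mgf_hat_def by (rule nn_integral_mono_AE)
  then show "mgf_hat G g \<le> ennreal (exp (g * K))" using e1 by simp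
qed


lemma ratio_tendsto_from_asymp:
  fixes f h :: "real \<Rightarrow> real"
  assumes "f \<sim>[F] (\<lambda>x. c * h x)" "c \<noteq> 0" "eventually (\<lambda>x. h x > 0) F"
  shows "((\<lambda>x. f x / h x) \<longlongrightarrow> c) F"
proof -
  have ev: "eventually (\<lambda>x. f x \<noteq> 0 \<or> c * h x \<noteq> 0) F"
    using assms(3) by eventually_elim (use assms(2) in auto)
  have "((\<lambda>x. f x / (c * h x)) \<longlongrightarrow> 1) F"
    by (rule asymp_equivD_strong[OF assms(1) ev])
  then have "((\<lambda>x. c * (f x / (c * h x))) \<longlongrightarrow> c * 1) F"
    by (intro tendsto_mult tendsto_const)
  moreover have "c * (f x / (c * h x)) = f x / h x" for x
    using assms(2) by (simp add: field_simps)
  ultimately show ?thesis by simp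
qed

lemma tail_conv_asymp:
  fixes G P :: "real measure"
  assumes G: "prob_space G" and P: "prob_space P"
    and sG[measurable_cong]: "sets G = sets borel" and sP: "sets P = sets borel"
    and aG: "AE y in G. y \<in> {0..K}" and g: "0 \<le> g"
    and pos: "eventually (\<lambda>x. tail P x > 0) at_top"
    and L: "\<forall>a. (\<lambda>x. tail P (x + a)) \<sim>[at_top] (\<lambda>x. exp (- g * a) * tail P x)"
  shows "(\<lambda>x. tail (G \<star> P) x) \<sim>[at_top] (\<lambda>x. enn2real (mgf_hat G g) * tail P x)"
proof -
  have fG: "finite_measure G" and fP: "finite_measure P"
    using G P by (auto simp: prob_space.finite_measure)
  have K0: "0 \<le> K"
  proof -
    have "\<not> (AE y in G. False)" using prob_space.AE_False[OF G] by simp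
    moreover have "K < 0 \<Longrightarrow> AE y in G. False" using aG by (auto elim!: eventually_mono)
    ultimately show ?thesis by force
  qed
  define s where "s t y = tail P (t - y) / tail P t" for t y
  define w where "w y = 2 * exp (g * K)" for y :: real
  have tm: "tail P \<in> borel_measurable borel" by (rule tail_measurable[OF fP sP])
  have smeas: "s t \<in> borel_measurable G" for t
    unfolding s_def using tm by (simp add: measurable_cong_sets[OF sG refl])
  have emeas: "(\<lambda>y. exp (g * y)) \<in> borel_measurable G"
    by (simp add: measurable_cong_sets[OF sG refl])
  have wint: "integrable G w" unfolding w_def using finite_measure.integrable_const[OF fG] .
  have lim: "AE y in G. ((\<lambda>t. s t y) \<longlongrightarrow> exp (g * y)) at_top"
  proof (rule AE_I2)
    fix y
    have "(\<lambda>x. tail P (x + - y)) \<sim>[at_top] (\<lambda>x. exp (- g * - y) * tail P x)" using L by blast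
    then have "((\<lambda>x. tail P (x + - y) / tail P x) \<longlongrightarrow> exp (- g * - y)) at_top"
      by (rule ratio_tendsto_from_asymp) (use pos in auto)
    then show "((\<lambda>t. s t y) \<longlongrightarrow> exp (g * y)) at_top" by (simp add: s_def)
  qed
  have "(\<lambda>x. tail P (x + - K)) \<sim>[at_top] (\<lambda>x. exp (- g * - K) * tail P x)" using L by blast
  then have "((\<lambda>x. tail P (x + - K) / tail P x) \<longlongrightarrow> exp (g * K)) at_top"
    by (subst (asm) mult_minus_right, subst (asm) minus_mult_left[symmetric], simp)
       (rule ratio_tendsto_from_asymp, auto simp: pos)
  then have "((\<lambda>x. tail P (x - K) / tail P x) \<longlongrightarrow> exp (g * K)) at_top" by simp
  then have evK: "eventually (\<lambda>x. tail P (x - K) / tail P x < 2 * exp (g * K)) at_top"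
    by (rule order_tendstoD) simp
  have bound: "\<forall>\<^sub>F t in at_top. AE y in G. norm (s t y) \<le> w y"
    using evK pos
  proof eventually_elim
    case (elim t)
    show ?case using aG
    proof eventually_elim
      case (elim y)
      have "tail P (t - y) \<le> tail P (t - K)" using elim by (intro tail_antimono[OF fP sP]) auto
      then have "s t y \<le> tail P (t - K) / tail P t"
        unfolding s_def using \<open>0 < tail P t\<close> by (intro divide_right_mono) auto
      moreover have "0 \<le> s t y" unfolding s_def by (simp add: tail_nonneg)
      ultimately show ?case using \<open>tail P (t - K) / tail P t < 2 * exp (g * K)\<close>
        by (simp add: w_def)
    qed
  qed
  have lim2: "((\<lambda>t. \<integral>y. s t y \<partial>G) \<longlongrightarrow> (\<integral>y. exp (g * y) \<partial>G)) at_top"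
    by (rule integral_dominated_convergence_at_top[OF emeas smeas wint lim bound])
  have eint: "integrable G (\<lambda>y. exp (g * y))"
  proof (rule finite_measure.integrable_const_bound[OF fG _ emeas])
    show "AE y in G. norm (exp (g * y)) \<le> exp (g * K)"
      using aG by eventually_elim (use g in \<open>auto intro!: mult_left_mono\<close>)
  qed
  have mgf_eq: "enn2real (mgf_hat G g) = (\<integral>y. exp (g * y) \<partial>G)"
    unfolding mgf_hat_def by (subst nn_integral_eq_integral[OF eint]) auto
  have m1: "1 \<le> enn2real (mgf_hat G g)"
  proof -
    have "1 \<le> mgf_hat G g" "mgf_hat G g \<le> ennreal (exp (g * K))"
      using mgf_bounds[OF G sG aG g] by auto
    then show ?thesis
      by (metis enn2real_1 enn2real_mono ennreal_less_top le_less_trans)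
  qed
  have eq: "(\<integral>y. s t y \<partial>G) = tail (G \<star> P) t / tail P t" for t
    unfolding s_def tail_conv[OF fG fP sG sP] by simp
  have "((\<lambda>t. tail (G \<star> P) t / tail P t) \<longlongrightarrow> enn2real (mgf_hat G g)) at_top"
    using lim2 unfolding eq mgf_eq .
  then have "((\<lambda>t. (tail (G \<star> P) t / tail P t) / enn2real (mgf_hat G g)) \<longlongrightarrow>
      enn2real (mgf_hat G g) / enn2real (mgf_hat G g)) at_top"
    by (intro tendsto_divide tendsto_const) (use m1 in auto)
  then have "((\<lambda>t. tail (G \<star> P) t / (enn2real (mgf_hat G g) * tail P t)) \<longlongrightarrow> 1) at_top"
    using m1 by (simp add: field_simps)
  then show ?thesis by (rule asymp_equivI')
qed


lemma asymp_cmult: "f \<sim>[F] g \<Longrightarrow> (\<lambda>x. (c::real) * f x) \<sim>[F] (\<lambda>x. c * g x)"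
  by (rule asymp_equiv_mult[OF asymp_equiv_refl])

lemma filterlim_shift: "filterlim (\<lambda>x::real. x + a) at_top at_top"
  using filterlim_tendsto_add_at_top[OF tendsto_const[of a] filterlim_ident] by (simp add: add.commute)

lemma asymp_shift:
  fixes f g :: "real \<Rightarrow> real"
  shows "f \<sim>[at_top] g \<Longrightarrow> (\<lambda>x. f (x + a)) \<sim>[at_top] (\<lambda>x. g (x + a))"
  by (rule asymp_equiv_compose'[OF _ filterlim_shift])

lemma mgf_pos:
  fixes H :: "real measure"
  assumes "prob_space H" "sets H = sets borel"
  shows "mgf_hat H g \<noteq> 0"
proof
  assume "mgf_hat H g = 0"
  then have "AE x in H. ennreal (exp (g * x)) = 0"
    unfolding mgf_hat_def using assms(2) by (subst (asm) nn_integral_0_iff_AE) (auto simp: measurable_cong_sets[OF assms(2) refl])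
  then have "AE x in H. False" by (auto elim!: eventually_mono)
  then show False using prob_space.AE_False[OF assms(1)] by simp
qed

lemma L_transfer:
  fixes T H :: "real \<Rightarrow> real"
  assumes "T \<sim>[at_top] (\<lambda>x. m * H x)"
    and "\<forall>a. (\<lambda>x. H (x + a)) \<sim>[at_top] (\<lambda>x. exp (- g * a) * H x)"
  shows "\<forall>a. (\<lambda>x. T (x + a)) \<sim>[at_top] (\<lambda>x. exp (- g * a) * T x)"
proof
  fix a
  have "(\<lambda>x. T (x + a)) \<sim>[at_top] (\<lambda>x. m * H (x + a))"
    using asymp_shift[OF assms(1)] .
  also have "\<dots> \<sim>[at_top] (\<lambda>x. m * (exp (- g * a) * H x))"
    using assms(2) by (intro asymp_cmult) blast
  also have "(\<lambda>x. m * (exp (- g * a) * H x)) = (\<lambda>x. exp (- g * a) * (m * H x))"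
    by (simp add: ac_simps)
  also have "\<dots> \<sim>[at_top] (\<lambda>x. exp (- g * a) * T x)"
    using assms(1) by (intro asymp_cmult) (simp add: asymp_equiv_sym)
  finally show "(\<lambda>x. T (x + a)) \<sim>[at_top] (\<lambda>x. exp (- g * a) * T x)" .
qed

lemma classS_forward:
  fixes G H :: "real measure"
  assumes G: "prob_space G" and H: "prob_space H"
    and sG[measurable_cong]: "sets G = sets borel" and sH[measurable_cong]: "sets H = sets borel"
    and aG: "AE y in G. y \<in> {0..K}" and g: "0 \<le> g"
    and S: "class_S g H"
  shows "class_S g (G \<star> H)"
proof -
  have fG: "finite_measure G" and fH: "finite_measure H"
    using G H by (auto simp: prob_space.finite_measure)
  have posH: "\<forall>x. tail H x > 0" and LH: "\<forall>a. (\<lambda>x. tail H (x + a)) \<sim>[at_top] (\<lambda>x. exp (- g * a) * tail H x)"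
    and mH: "mgf_hat H g < \<infinity>"
    and SH: "(\<lambda>x. tail (H \<star> H) x) \<sim>[at_top] (\<lambda>x. 2 * enn2real (mgf_hat H g) * tail H x)"
    using S unfolding class_S_def class_L_def by auto
  have mGb: "1 \<le> mgf_hat G g" "mgf_hat G g \<le> ennreal (exp (g * K))"
    using mgf_bounds[OF G sG aG g] by auto
  then have mG: "mgf_hat G g < \<infinity>" by (metis ennreal_less_top infinity_ennreal_def le_less_trans)
  have mHpos: "0 < enn2real (mgf_hat H g)"
    using mgf_pos[OF H sH, of g] mH by (simp add: enn2real_positive_iff less_top[symmetric] zero_less_iff_neq_zero)
  have T: "(\<lambda>x. tail (G \<star> H) x) \<sim>[at_top] (\<lambda>x. enn2real (mgf_hat G g) * tail H x)"
    using posH LH by (intro tail_conv_asymp[OF G H sG sH aG g]) auto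
  have posT: "\<forall>x. tail (G \<star> H) x > 0"
    using posH tail_sandwich(1)[OF G H sG sH aG] by (meson less_le_trans)
  have LT: "\<forall>a. (\<lambda>x. tail (G \<star> H) (x + a)) \<sim>[at_top] (\<lambda>x. exp (- g * a) * tail (G \<star> H) x)"
    by (rule L_transfer[OF T LH])
  have mGH: "mgf_hat (G \<star> H) g = mgf_hat G g * mgf_hat H g"
    by (rule mgf_conv[OF fG fH sG sH])
  have mGH_fin: "mgf_hat (G \<star> H) g < \<infinity>"
    using mG mH unfolding mGH by (simp add: ennreal_mult_less_top)
  have swap: "((G \<star> H) \<star> (G \<star> H)) = ((G \<star> G) \<star> (H \<star> H))"
    by (rule conv_swap4[OF fG fH fG fH sG sH sG sH])
  have G2: "prob_space (G \<star> G)" "sets (G \<star> G) = sets borel"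
    using conv_prob[OF G G sG sG] by auto
  have W: "prob_space (H \<star> H)" "sets (H \<star> H) = sets borel"
    using conv_prob[OF H H sH sH] by auto
  have aG2: "AE y in G \<star> G. y \<in> {0..K+K}"
    by (rule conv_supp[OF fG fG sG sG aG aG])
  have posW: "eventually (\<lambda>x. tail (H \<star> H) x > 0) at_top"
  proof -
    have "eventually (\<lambda>x. (tail (H \<star> H) x = 0) = (2 * enn2real (mgf_hat H g) * tail H x = 0)) at_top"
      by (rule asymp_equiv_eventually_zeros[OF SH])
    then show ?thesis
    proof eventually_elim
      case (elim x)
      have "tail H x > 0" using posH by blast
      then have "2 * enn2real (mgf_hat H g) * tail H x \<noteq> 0" using mHpos by simp
      then have "tail (H \<star> H) x \<noteq> 0" using elim by simp
      then show ?case using tail_nonneg[of "H \<star> H" x] by linarith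
    qed
  qed
  have SH': "(\<lambda>x. tail (H \<star> H) x) \<sim>[at_top] (\<lambda>x. (2 * enn2real (mgf_hat H g)) * tail H x)"
    using SH by simp
  have LW: "\<forall>a. (\<lambda>x. tail (H \<star> H) (x + a)) \<sim>[at_top] (\<lambda>x. exp (- g * a) * tail (H \<star> H) x)"
    by (rule L_transfer[OF SH' LH])
  have Q: "(\<lambda>x. tail ((G \<star> G) \<star> (H \<star> H)) x) \<sim>[at_top]
      (\<lambda>x. enn2real (mgf_hat (G \<star> G) g) * tail (H \<star> H) x)"
    by (rule tail_conv_asymp[OF G2(1) W(1) G2(2) W(2) aG2 g posW LW])
  also have "\<dots> \<sim>[at_top] (\<lambda>x. enn2real (mgf_hat (G \<star> G) g) * ((2 * enn2real (mgf_hat H g)) * tail H x))"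
    by (intro asymp_cmult SH')
  also have "(\<lambda>x. enn2real (mgf_hat (G \<star> G) g) * ((2 * enn2real (mgf_hat H g)) * tail H x)) =
      (\<lambda>x. (2 * enn2real (mgf_hat (G \<star> H) g)) * (enn2real (mgf_hat G g) * tail H x))"
    by (simp add: mgf_conv[OF fG fG sG sG] mGH enn2real_mult ac_simps)
  also have "\<dots> \<sim>[at_top] (\<lambda>x. (2 * enn2real (mgf_hat (G \<star> H) g)) * tail (G \<star> H) x)"
    using T by (intro asymp_cmult) (simp add: asymp_equiv_sym)
  finally have SGH: "(\<lambda>x. tail ((G \<star> H) \<star> (G \<star> H)) x) \<sim>[at_top]
      (\<lambda>x. 2 * enn2real (mgf_hat (G \<star> H) g) * tail (G \<star> H) x)"
    unfolding swap by simp
  show ?thesis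
    unfolding class_S_def class_L_def using posT LT mGH_fin SGH by auto
qed


lemma squeeze_tendsto:
  fixes f :: "'a \<Rightarrow> real"
  assumes "\<And>\<epsilon>. \<epsilon> > 0 \<Longrightarrow> \<exists>u v lu lv. (u \<longlongrightarrow> lu) F \<and> (v \<longlongrightarrow> lv) F \<and> L - \<epsilon> < lu \<and> lv < L + \<epsilon> \<and>
            eventually (\<lambda>x. u x \<le> f x \<and> f x \<le> v x) F"
  shows "(f \<longlongrightarrow> L) F"
proof (rule order_tendstoI)
  fix a assume "a < L"
  then obtain u v lu lv where uv: "(u \<longlongrightarrow> lu) F" "(v \<longlongrightarrow> lv) F" "L - (L - a) < lu"
      "eventually (\<lambda>x. u x \<le> f x \<and> f x \<le> v x) F"
    using assms[of "L - a"] by auto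
  have "eventually (\<lambda>x. a < u x) F" using uv(1,3) by (intro order_tendstoD) auto
  with uv(4) show "eventually (\<lambda>x. a < f x) F" by eventually_elim auto
next
  fix a assume "L < a"
  then obtain u v lu lv where uv: "(u \<longlongrightarrow> lu) F" "(v \<longlongrightarrow> lv) F" "lv < L + (a - L)"
      "eventually (\<lambda>x. u x \<le> f x \<and> f x \<le> v x) F"
    using assms[of "a - L"] by auto
  have "eventually (\<lambda>x. v x < a) F" using uv(2,3) by (intro order_tendstoD) auto
  with uv(4) show "eventually (\<lambda>x. f x < a) F" by eventually_elim auto
qed

lemma exists_small:
  assumes "eventually P (at_right (0::real))" shows "\<exists>K>0. P K"
proof -
  from assms obtain b where "b > 0" "\<And>y. y > 0 \<Longrightarrow> y < b \<Longrightarrow> P y"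
    by (auto simp: eventually_at_right_field)
  then show ?thesis by (intro exI[of _ "b/2"]) auto
qed

lemma L_ratio:
  assumes "class_L g M"
  shows "((\<lambda>x. tail M (x + a) / tail M x) \<longlongrightarrow> exp (- g * a)) at_top"
  using assms unfolding class_L_def
  by (intro ratio_tendsto_from_asymp) auto

lemma classS_backward:
  fixes H :: "real measure"
  assumes H: "prob_space H" and sH[measurable_cong]: "sets H = sets borel" and g: "0 \<le> g"
    and ex: "\<And>K. K > 0 \<Longrightarrow> \<exists>G. prob_space G \<and> sets G = sets borel \<and> (AE y in G. y \<in> {0..K}) \<and>
              class_S g (G \<star> H)"
  shows "class_S g H"
proof -
  have fH: "finite_measure H" using H by (simp add: prob_space.finite_measure)
  have posH: "\<forall>x. tail H x > 0"
  proof
    fix x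
    obtain G where G: "prob_space G" "sets G = sets borel" "AE y in G. y \<in> {0..1}" "class_S g (G \<star> H)"
      using ex[of 1] by auto
    have "tail (G \<star> H) (x + 1) > 0" using G(4) unfolding class_S_def class_L_def by auto
    moreover have "tail (G \<star> H) (x + 1) \<le> tail H (x + 1 - 1)"
      by (rule tail_sandwich(2)[OF G(1) H G(2) sH G(3)])
    ultimately show "tail H x > 0" by simp
  qed
  have LH: "\<forall>a. (\<lambda>x. tail H (x + a)) \<sim>[at_top] (\<lambda>x. exp (- g * a) * tail H x)"
  proof
    fix a
    have lim: "((\<lambda>x. tail H (x + a) / tail H x) \<longlongrightarrow> exp (- g * a)) at_top"
    proof (rule squeeze_tendsto)
      fix \<epsilon> :: real assume "\<epsilon> > 0"
      have t1: "((\<lambda>K. exp (- g * (a + K))) \<longlongrightarrow> exp (- g * (a + 0))) (at_right 0)"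
        by (intro tendsto_intros)
      have t2: "((\<lambda>K. exp (- g * (a - K))) \<longlongrightarrow> exp (- g * (a - 0))) (at_right 0)"
        by (intro tendsto_intros)
      have "eventually (\<lambda>K. exp (- g * a) - \<epsilon> < exp (- g * (a + K)) \<and>
          exp (- g * (a - K)) < exp (- g * a) + \<epsilon>) (at_right 0)"
        using order_tendstoD(1)[OF t1, of "exp (- g * a) - \<epsilon>"] order_tendstoD(2)[OF t2, of "exp (- g * a) + \<epsilon>"]
          \<open>\<epsilon> > 0\<close> by (auto intro: eventually_conj)
      then obtain K where K: "K > 0" "exp (- g * a) - \<epsilon> < exp (- g * (a + K))"
          "exp (- g * (a - K)) < exp (- g * a) + \<epsilon>"
        using exists_small by blast
      obtain G where G: "prob_space G" "sets G = sets borel" "AE y in G. y \<in> {0..K}" "class_S g (G \<star> H)"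
        using ex[OF K(1)] by auto
      let ?T = "tail (G \<star> H)"
      have LT: "class_L g (G \<star> H)" using G(4) unfolding class_S_def by auto
      have posT: "\<forall>x. ?T x > 0" using LT unfolding class_L_def by auto
      have u: "((\<lambda>x. ?T (x + (a + K)) / ?T x) \<longlongrightarrow> exp (- g * (a + K))) at_top"
        by (rule L_ratio[OF LT])
      have "((\<lambda>x. ?T (x + (a - K)) / ?T x) \<longlongrightarrow> exp (- g * (a - K))) at_top"
        by (rule L_ratio[OF LT])
      from filterlim_compose[OF this filterlim_shift[of K]]
      have v: "((\<lambda>x. ?T (x + a) / ?T (x + K)) \<longlongrightarrow> exp (- g * (a - K))) at_top"
        by (simp add: algebra_simps)
      have "eventually (\<lambda>x. ?T (x + (a + K)) / ?T x \<le> tail H (x + a) / tail H x \<and>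
          tail H (x + a) / tail H x \<le> ?T (x + a) / ?T (x + K)) at_top"
      proof (intro always_eventually allI conjI)
        fix x
        have s1: "?T (x + (a + K)) \<le> tail H (x + (a + K) - K)"
          by (rule tail_sandwich(2)[OF G(1) H G(2) sH G(3)])
        have s2: "tail H x \<le> ?T x" by (rule tail_sandwich(1)[OF G(1) H G(2) sH G(3)])
        have s3: "tail H (x + a) \<le> ?T (x + a)" by (rule tail_sandwich(1)[OF G(1) H G(2) sH G(3)])
        have s4: "?T (x + K) \<le> tail H (x + K - K)"
          by (rule tail_sandwich(2)[OF G(1) H G(2) sH G(3)])
        show "?T (x + (a + K)) / ?T x \<le> tail H (x + a) / tail H x"
          using s1 s2 posH posT by (intro frac_le) (auto simp: add.assoc tail_nonneg)
        show "tail H (x + a) / tail H x \<le> ?T (x + a) / ?T (x + K)"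
          using s3 s4 posH posT by (intro frac_le) (auto simp: tail_nonneg)
      qed
      then show "\<exists>u v lu lv. (u \<longlongrightarrow> lu) at_top \<and> (v \<longlongrightarrow> lv) at_top \<and>
          exp (- g * a) - \<epsilon> < lu \<and> lv < exp (- g * a) + \<epsilon> \<and>
          eventually (\<lambda>x. u x \<le> tail H (x + a) / tail H x \<and> tail H (x + a) / tail H x \<le> v x) at_top"
        using u v K by blast
    qed
    have "((\<lambda>x. (tail H (x + a) / tail H x) / exp (- g * a)) \<longlongrightarrow> exp (- g * a) / exp (- g * a)) at_top"
      by (intro tendsto_divide lim tendsto_const) simp
    then have "((\<lambda>x. tail H (x + a) / (exp (- g * a) * tail H x)) \<longlongrightarrow> 1) at_top"
      by (simp add: mult.commute)
    then show "(\<lambda>x. tail H (x + a)) \<sim>[at_top] (\<lambda>x. exp (- g * a) * tail H x)"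
      by (rule asymp_equivI')
  qed
  have LclH: "class_L g H" unfolding class_L_def using posH LH by auto
  obtain G1 where G1: "prob_space G1" "sets G1 = sets borel" "AE y in G1. y \<in> {0..1}" "class_S g (G1 \<star> H)"
    using ex[of 1] by auto
  have mH: "mgf_hat H g < \<infinity>"
  proof -
    have fG1: "finite_measure G1" using G1(1) by (simp add: prob_space.finite_measure)
    have "mgf_hat G1 g * mgf_hat H g < \<infinity>"
      using G1(4) mgf_conv[OF fG1 fH G1(2) sH] unfolding class_S_def by simp
    moreover have "mgf_hat G1 g \<noteq> 0" by (rule mgf_pos[OF G1(1,2)])
    ultimately show ?thesis by (auto simp: ennreal_mult_less_top less_top)
  qed
  have mHpos: "0 < enn2real (mgf_hat H g)"
    using mgf_pos[OF H sH, of g] mH by (simp add: enn2real_positive_iff less_top[symmetric] zero_less_iff_neq_zero)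
  define L where "L = 2 * enn2real (mgf_hat H g)"
  have Lpos: "L > 0" using mHpos by (simp add: L_def)
  have limS: "((\<lambda>x. tail (H \<star> H) x / tail H x) \<longlongrightarrow> L) at_top"
  proof (rule squeeze_tendsto)
    fix \<epsilon> :: real assume "\<epsilon> > 0"
    have t1: "((\<lambda>K. L * exp (- (2 * g * K))) \<longlongrightarrow> L * exp (- (2 * g * 0))) (at_right 0)"
      by (intro tendsto_intros)
    have t2: "((\<lambda>K. L * exp (2 * g * K)) \<longlongrightarrow> L * exp (2 * g * 0)) (at_right 0)"
      by (intro tendsto_intros)
    have "eventually (\<lambda>K. L - \<epsilon> < L * exp (- (2 * g * K)) \<and> L * exp (2 * g * K) < L + \<epsilon>) (at_right 0)"
      using order_tendstoD(1)[OF t1, of "L - \<epsilon>"] order_tendstoD(2)[OF t2, of "L + \<epsilon>"]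
        \<open>\<epsilon> > 0\<close> by (auto intro: eventually_conj)
    then obtain K where K: "K > 0" "L - \<epsilon> < L * exp (- (2 * g * K))" "L * exp (2 * g * K) < L + \<epsilon>"
      using exists_small by blast
    obtain G where G: "prob_space G" "sets G = sets borel" "AE y in G. y \<in> {0..K}" "class_S g (G \<star> H)"
      using ex[OF K(1)] by auto
    have fG: "finite_measure G" using G(1) by (simp add: prob_space.finite_measure)
    let ?T = "tail (G \<star> H)"
    let ?Q = "tail ((G \<star> G) \<star> (H \<star> H))"
    have LT: "class_L g (G \<star> H)" using G(4) unfolding class_S_def by auto
    have posT: "\<forall>x. ?T x > 0" using LT unfolding class_L_def by auto
    have swap: "((G \<star> H) \<star> (G \<star> H)) = ((G \<star> G) \<star> (H \<star> H))"
      by (rule conv_swap4[OF fG fH fG fH G(2) sH G(2) sH])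
    have mGb: "1 \<le> mgf_hat G g" "mgf_hat G g \<le> ennreal (exp (g * K))"
      using mgf_bounds[OF G(1,2,3) g] by auto
    define mG where "mG = enn2real (mgf_hat G g)"
    have mG1: "1 \<le> mG" unfolding mG_def using mGb
      by (metis enn2real_1 enn2real_mono ennreal_less_top infinity_ennreal_def le_less_trans)
    have mG2: "mG \<le> exp (g * K)" unfolding mG_def using mGb
      by (metis enn2real_ennreal enn2real_mono ennreal_less_top exp_ge_zero infinity_ennreal_def)
    define c where "c = 2 * enn2real (mgf_hat (G \<star> H) g)"
    have c_eq: "c = mG * L"
      unfolding c_def mG_def L_def mgf_conv[OF fG fH G(2) sH] by (simp add: enn2real_mult)
    have cpos: "c > 0" using c_eq mG1 Lpos by simp
    have SQ: "?Q \<sim>[at_top] (\<lambda>x. c * ?T x)"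
      using G(4) unfolding class_S_def swap c_def by simp
    have rQ: "((\<lambda>x. ?Q x / ?T x) \<longlongrightarrow> c) at_top"
      by (rule ratio_tendsto_from_asymp[OF SQ]) (use cpos posT in auto)
    have rQ2: "((\<lambda>x. ?Q (x + 2 * K) / ?T (x + 2 * K)) \<longlongrightarrow> c) at_top"
      using filterlim_compose[OF rQ filterlim_shift[of "2 * K"]] by simp
    have rT1: "((\<lambda>x. ?T (x + 2 * K) / ?T x) \<longlongrightarrow> exp (- g * (2 * K))) at_top"
      by (rule L_ratio[OF LT])
    have rT2: "((\<lambda>x. ?T (x + K) / ?T x) \<longlongrightarrow> exp (- g * K)) at_top"
      by (rule L_ratio[OF LT])
    define u where "u x = (?Q (x + 2 * K) / ?T (x + 2 * K)) * (?T (x + 2 * K) / ?T x)" for x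
    define v where "v x = (?Q x / ?T x) / (?T (x + K) / ?T x)" for x
    have u: "(u \<longlongrightarrow> c * exp (- g * (2 * K))) at_top"
      unfolding u_def by (intro tendsto_mult rQ2 rT1)
    have v: "(v \<longlongrightarrow> c / exp (- g * K)) at_top"
      unfolding v_def by (intro tendsto_divide rQ rT2) simp
    have lu: "L - \<epsilon> < c * exp (- g * (2 * K))"
    proof -
      have "L * exp (- (2 * g * K)) \<le> c * exp (- g * (2 * K))"
        unfolding c_eq using mG1 Lpos by (simp add: algebra_simps)
      then show ?thesis using K(2) by linarith
    qed
    have lv: "c / exp (- g * K) < L + \<epsilon>"
    proof -
      have "c / exp (- g * K) = mG * L * exp (g * K)" unfolding c_eq by (simp add: exp_minus field_simps)
      also have "\<dots> \<le> exp (g * K) * L * exp (g * K)"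
        using mG2 Lpos by (intro mult_right_mono) auto
      also have "\<dots> = L * exp (2 * g * K)"
      proof -
        have "exp (g * K) * exp (g * K) = exp (2 * g * K)" by (simp add: mult_exp_exp)
        then show ?thesis by (simp add: algebra_simps)
      qed
      finally show ?thesis using K(3) by linarith
    qed
    have G2: "prob_space (G \<star> G)" "sets (G \<star> G) = sets borel"
      using conv_prob[OF G(1) G(1) G(2) G(2)] by auto
    have W: "prob_space (H \<star> H)" "sets (H \<star> H) = sets borel"
      using conv_prob[OF H H sH sH] by auto
    have aG2: "AE y in G \<star> G. y \<in> {0..K+K}"
      by (rule conv_supp[OF fG fG G(2) G(2) G(3) G(3)])
    have "eventually (\<lambda>x. u x \<le> tail (H \<star> H) x / tail H x \<and> tail (H \<star> H) x / tail H x \<le> v x) at_top"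
    proof (intro always_eventually allI conjI)
      fix x
      have s1: "?Q (x + 2 * K) \<le> tail (H \<star> H) (x + 2 * K - (K + K))"
        by (rule tail_sandwich(2)[OF G2(1) W(1) G2(2) W(2) aG2])
      have s2: "tail H x \<le> ?T x" by (rule tail_sandwich(1)[OF G(1) H G(2) sH G(3)])
      have s3: "tail (H \<star> H) x \<le> ?Q x" by (rule tail_sandwich(1)[OF G2(1) W(1) G2(2) W(2) aG2])
      have s4: "?T (x + K) \<le> tail H (x + K - K)"
        by (rule tail_sandwich(2)[OF G(1) H G(2) sH G(3)])
      have Tx: "?T x > 0" "?T (x + K) > 0" "?T (x + 2 * K) > 0" using posT by auto
      have "u x = ?Q (x + 2 * K) / ?T x" unfolding u_def using Tx by simp
      also have "\<dots> \<le> tail (H \<star> H) x / tail H x"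
        using s1 s2 posH posT by (intro frac_le) (auto simp: tail_nonneg)
      finally show "u x \<le> tail (H \<star> H) x / tail H x" .
      have "tail (H \<star> H) x / tail H x \<le> ?Q x / ?T (x + K)"
        using s3 s4 posH posT by (intro frac_le) (auto simp: tail_nonneg)
      also have "\<dots> = v x" unfolding v_def using Tx by simp
      finally show "tail (H \<star> H) x / tail H x \<le> v x" .
    qed
    then show "\<exists>u v lu lv. (u \<longlongrightarrow> lu) at_top \<and> (v \<longlongrightarrow> lv) at_top \<and> L - \<epsilon> < lu \<and> lv < L + \<epsilon> \<and>
        eventually (\<lambda>x. u x \<le> tail (H \<star> H) x / tail H x \<and> tail (H \<star> H) x / tail H x \<le> v x) at_top"
      using u v lu lv by blast
  qed
  have "((\<lambda>x. (tail (H \<star> H) x / tail H x) / L) \<longlongrightarrow> L / L) at_top"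
    by (intro tendsto_divide limS tendsto_const) (use Lpos in simp)
  then have "((\<lambda>x. tail (H \<star> H) x / (L * tail H x)) \<longlongrightarrow> 1) at_top"
    using Lpos by (simp add: mult.commute)
  then have SH: "(\<lambda>x. tail (H \<star> H) x) \<sim>[at_top] (\<lambda>x. 2 * enn2real (mgf_hat H g) * tail H x)"
    unfolding L_def by (rule asymp_equivI')
  show ?thesis unfolding class_S_def using LclH mH SH by auto
qed



lemma ftc_real:
  fixes g c :: real
  assumes g: "g > 0" and c: "c > 0"
  shows "((\<lambda>x. exp (- g * x) * (1 - x / c)) has_integral
           ((exp (- g * c) - 1 + c * g) / (c * g^2))) {0..c}"
proof -
  define P where "P x = exp (- g * x) * ((1 - x / c) / (- g) + 1 / (c * g^2))" for x
  have d: "(P has_vector_derivative exp (- g * x) * (1 - x / c)) (at x within {0..c})" for x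
  proof -
    have "(P has_real_derivative exp (- g * x) * (1 - x / c)) (at x)"
      unfolding P_def using g c
      by (auto intro!: derivative_eq_intros simp: field_simps power2_eq_square)
    then show ?thesis by (simp add: has_real_derivative_iff_has_vector_derivative has_vector_derivative_at_within)
  qed
  have "((\<lambda>x. exp (- g * x) * (1 - x / c)) has_integral (P c - P 0)) {0..c}"
    using c by (intro fundamental_theorem_of_calculus d) auto
  moreover have "P c - P 0 = (exp (- g * c) - 1 + c * g) / (c * g^2)"
    unfolding P_def using g c by (simp add: field_simps power2_eq_square)
  ultimately show ?thesis by simp
qed

lemma ftc_complex:
  fixes w :: complex and c :: real
  assumes w: "w \<noteq> 0" and c: "c > 0"
  shows "((\<lambda>x. exp (w * of_real x) * (1 - of_real x / of_real c)) has_integral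
           ((exp (w * of_real c) - 1 - of_real c * w) / (of_real c * w^2))) {0..c}"
proof -
  define P where "P t = exp (w * t) * ((1 - t / of_real c) / w + 1 / (of_real c * w^2))" for t :: complex
  have d: "((\<lambda>x. P (of_real x)) has_vector_derivative exp (w * of_real x) * (1 - of_real x / of_real c)) (at x within {0..c})" for x
  proof -
    have "(P has_field_derivative exp (w * of_real x) * (1 - of_real x / of_real c)) (at (of_real x))"
      unfolding P_def using w c
      by (auto intro!: derivative_eq_intros simp: field_simps power2_eq_square)
    then show ?thesis by (rule has_vector_derivative_real_field)
  qed
  have "((\<lambda>x. exp (w * of_real x) * (1 - of_real x / of_real c)) has_integral (P (of_real c) - P (of_real 0))) {0..c}"
    using c by (intro fundamental_theorem_of_calculus d) auto
  moreover have "P (of_real c) - P (of_real 0) = (exp (w * of_real c) - 1 - of_real c * w) / (of_real c * w^2)"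
    unfolding P_def using w c by (simp add: field_simps power2_eq_square)
  ultimately show ?thesis by simp
qed

lemma ftc_complex0:
  fixes c :: real
  assumes c: "c > 0"
  shows "((\<lambda>x. (1 - of_real x / of_real c) :: complex) has_integral (of_real c / 2)) {0..c}"
proof -
  define P where "P t = t - t^2 / (2 * of_real c)" for t :: complex
  have d: "((\<lambda>x. P (of_real x)) has_vector_derivative (1 - of_real x / of_real c)) (at x within {0..c})" for x
  proof -
    have "(P has_field_derivative (1 - of_real x / of_real c)) (at (of_real x))"
      unfolding P_def using c
      by (auto intro!: derivative_eq_intros simp: field_simps power2_eq_square)
    then show ?thesis by (rule has_vector_derivative_real_field)
  qed
  have "((\<lambda>x. (1 - of_real x / of_real c) :: complex) has_integral (P (of_real c) - P (of_real 0))) {0..c}"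
    using c by (intro fundamental_theorem_of_calculus d) auto
  moreover have "P (of_real c) - P (of_real 0) = of_real c / 2"
  proof -
    have "complex_of_real c \<noteq> 0" using c by simp
    then show ?thesis unfolding P_def using c by (simp add: field_simps power2_eq_square)
  qed
  ultimately show ?thesis by (metis of_real_0)
qed

lemma c_one_eq:
  assumes g: "g > 0" and c: "c > 0"
  shows "c_one g c = (exp (- g * c) - 1 + c * g) / (c * g^2)" "c_one g c > 0"
proof -
  have int: "set_integrable lborel {0..c} (\<lambda>x. exp (- g * x) * (1 - x / c))"
    unfolding set_integrable_def
    using c by (intro borel_integrable_compact) (auto intro!: continuous_intros)
  have "c_one g c = integral {0..c} (\<lambda>x. exp (- g * x) * (1 - x / c))"
    unfolding c_one_def by (rule set_borel_integral_eq_integral(2)[OF int])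
  also have "\<dots> = (exp (- g * c) - 1 + c * g) / (c * g^2)"
    using ftc_real[OF g c] by (rule integral_unique)
  finally show "c_one g c = (exp (- g * c) - 1 + c * g) / (c * g^2)" .
  moreover have "1 - c * g < exp (- (c * g))"
    using exp_minus_greater[of "c * g"] g c by simp
  then have "exp (- g * c) - 1 + c * g > 0" by (simp add: mult.commute)
  ultimately show "c_one g c > 0" using g c by (simp add: divide_pos_pos)
qed

lemma f_c_alt:
  assumes c: "c > 0"
  shows "f_c g c x = indicator {0..c} x * (exp (- g * x) * (1 - x / c)) / c_one g c"
  using c unfolding f_c_def by (cases "x = c") (auto simp: indicator_def)

lemma f_c_nonneg:
  assumes g: "g > 0" and c: "c > 0"
  shows "0 \<le> f_c g c x"
  using c_one_eq(2)[OF g c] c unfolding f_c_def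
  by (auto simp: indicator_def intro!: divide_nonneg_pos mult_nonneg_nonneg)

lemma f_c_meas[measurable]: "f_c g c \<in> borel_measurable borel"
  unfolding f_c_def by measurable

lemma Fc_props:
  assumes g: "g > 0" and c: "c > 0"
  defines "F \<equiv> density lborel (\<lambda>x. ennreal (f_c g c x))"
  shows "prob_space F" "sets F = sets borel" "AE x in F. x \<in> {0..c}"
proof -
  show sF: "sets F = sets borel" unfolding F_def by simp
  have c1: "c_one g c > 0" by (rule c_one_eq(2)[OF g c])
  have int0: "integrable lborel (\<lambda>x. indicator {0..c} x *\<^sub>R (exp (- g * x) * (1 - x / c)))"
    using c by (intro borel_integrable_compact) (auto intro!: continuous_intros)
  have feq: "f_c g c = (\<lambda>x. (indicator {0..c} x *\<^sub>R (exp (- g * x) * (1 - x / c))) / c_one g c)"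
    using f_c_alt[OF c] by (auto simp: fun_eq_iff)
  have int: "integrable lborel (f_c g c)"
    unfolding feq using int0 by (rule integrable_divide_zero)
  have "(\<integral>x. f_c g c x \<partial>lborel) = c_one g c / c_one g c"
    unfolding feq c_one_def set_lebesgue_integral_def by (rule integral_divide_zero)
  then have I1: "(\<integral>x. f_c g c x \<partial>lborel) = 1" using c1 by simp
  have "emeasure F (space F) = (\<integral>\<^sup>+x. ennreal (f_c g c x) \<partial>lborel)"
    unfolding F_def by (subst emeasure_density) (auto simp: f_c_meas)
  also have "\<dots> = ennreal (\<integral>x. f_c g c x \<partial>lborel)"
    by (intro nn_integral_eq_integral int) (simp add: f_c_nonneg[OF g c])
  finally show "prob_space F" using I1 by (intro prob_spaceI) simp
  have "AE x in lborel. ennreal (f_c g c x) \<noteq> 0 \<longrightarrow> x \<in> {0..c}"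
    by (rule AE_I2) (auto simp: f_c_def indicator_def)
  then show "AE x in F. x \<in> {0..c}"
    unfolding F_def by (subst AE_density) (auto simp: f_c_meas)
qed

lemma Fc_cmgf:
  assumes g: "g > 0" and c: "c > 0"
  shows "cmgf_hat (density lborel (\<lambda>x. ennreal (f_c g c x))) g z \<noteq> 0"
proof -
  have c1: "c_one g c > 0" by (rule c_one_eq(2)[OF g c])
  define w where "w = Complex 0 z"
  define \<phi> where "\<phi> x = exp (w * of_real x) * (1 - of_real x / of_real c)" for x :: real
  have pw: "f_c g c x *\<^sub>R exp (Complex g z * of_real x) = indicator {0..c} x *\<^sub>R (\<phi> x / of_real (c_one g c))" for x
  proof -
    have "Complex g z * of_real x = of_real (g * x) + w * of_real x"
      unfolding w_def by (simp add: complex_eq_iff)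
    then have e: "exp (Complex g z * of_real x) = of_real (exp (g * x)) * exp (w * of_real x)"
      by (simp only: exp_add exp_of_real)
    have ee: "exp (- g * x) * exp (g * x) = 1" by (simp add: exp_minus[symmetric] mult_exp_exp)
    have r: "f_c g c x * exp (g * x) = indicator {0..c} x * (1 - x / c) / c_one g c"
    proof -
      have "f_c g c x * exp (g * x) = indicator {0..c} x * ((exp (- g * x) * exp (g * x)) * (1 - x / c)) / c_one g c"
        unfolding f_c_alt[OF c] by (simp only: times_divide_eq_left times_divide_eq_right mult_ac)
      then show ?thesis unfolding ee by simp
    qed
    have "f_c g c x *\<^sub>R exp (Complex g z * of_real x) = (f_c g c x * exp (g * x)) *\<^sub>R exp (w * of_real x)"
      unfolding e by (simp add: scaleR_conv_of_real)
    also have "\<dots> = indicator {0..c} x *\<^sub>R (\<phi> x / of_real (c_one g c))"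
      unfolding r \<phi>_def by (simp add: scaleR_conv_of_real)
    finally show ?thesis .
  qed
  have cont: "continuous_on {0..c} \<phi>" unfolding \<phi>_def using c by (auto intro!: continuous_intros)
  have sint: "set_integrable lborel {0..c} \<phi>"
    unfolding set_integrable_def by (intro borel_integrable_compact cont) auto
  have "cmgf_hat (density lborel (\<lambda>x. ennreal (f_c g c x))) g z =
      (\<integral>x. f_c g c x *\<^sub>R exp (Complex g z * of_real x) \<partial>lborel)"
    unfolding cmgf_hat_def
    by (rule integral_density) (auto simp: f_c_meas f_c_nonneg[OF g c])
  also have "\<dots> = (\<integral>x. indicator {0..c} x *\<^sub>R \<phi> x \<partial>lborel) / of_real (c_one g c)"
  proof -
    have "(\<lambda>x. indicator {0..c} x *\<^sub>R (\<phi> x / of_real (c_one g c))) =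
        (\<lambda>x. (indicator {0..c} x *\<^sub>R \<phi> x) / of_real (c_one g c))"
      by (simp add: fun_eq_iff scaleR_conv_of_real)
    then show ?thesis unfolding pw by (simp only: integral_divide_zero)
  qed
  also have "(\<integral>x. indicator {0..c} x *\<^sub>R \<phi> x \<partial>lborel) = integral {0..c} \<phi>"
    using set_borel_integral_eq_integral(2)[OF sint] by (simp add: set_lebesgue_integral_def)
  finally have eq: "cmgf_hat (density lborel (\<lambda>x. ennreal (f_c g c x))) g z = integral {0..c} \<phi> / of_real (c_one g c)" .
  have "integral {0..c} \<phi> \<noteq> 0"
  proof (cases "z = 0")
    case True
    then have "w = 0" unfolding w_def by (simp add: complex_eq_iff)
    then have "\<phi> = (\<lambda>x. 1 - of_real x / of_real c)" unfolding \<phi>_def by (auto simp: fun_eq_iff)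
    then have "integral {0..c} \<phi> = of_real c / 2" using ftc_complex0[OF c] by (simp add: integral_unique)
    then show ?thesis using c by (auto simp: field_simps)
  next
    case False
    then have w0: "w \<noteq> 0" unfolding w_def by (simp add: complex_eq_iff)
    have I: "integral {0..c} \<phi> = (exp (w * of_real c) - 1 - of_real c * w) / (of_real c * w^2)"
      unfolding \<phi>_def using ftc_complex[OF w0 c] by (rule integral_unique)
    have "exp (w * of_real c) \<noteq> 1 + of_real c * w"
    proof
      assume h: "exp (w * of_real c) = 1 + of_real c * w"
      have "norm (exp (w * of_real c)) = 1" unfolding w_def by (simp add: norm_exp_eq_Re)
      moreover have "norm (1 + of_real c * w) = sqrt (1 + (c * z)^2)"
        unfolding w_def by (simp add: cmod_def power2_eq_square)
      moreover have "sqrt (1 + (c * z)^2) > 1" using False c by simp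
      ultimately show False using h by simp
    qed
    then have "exp (w * of_real c) - 1 - of_real c * w \<noteq> 0" by (auto simp: algebra_simps)
    then show ?thesis unfolding I using w0 c by simp
  qed
  then show ?thesis unfolding eq using c1 by simp
qed



lemma cmgf_conv:
  fixes G H :: "real measure"
  assumes G: "finite_measure G" and H: "finite_measure H"
    and sG[measurable_cong]: "sets G = sets borel" and sH[measurable_cong]: "sets H = sets borel"
    and mG: "mgf_hat G g < \<infinity>" and mH: "mgf_hat H g < \<infinity>"
  shows "cmgf_hat (G \<star> H) g z = cmgf_hat G g z * cmgf_hat H g z"
proof -
  interpret G: finite_measure G by fact
  interpret H: finite_measure H by fact
  interpret pair_sigma_finite G H ..
  define e where "e x = exp (Complex g z * complex_of_real x)" for x :: real
  have em[measurable]: "e \<in> borel_measurable borel"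
    unfolding e_def by (intro borel_measurable_continuous_onI continuous_intros)
  have ne: "norm (e x) = exp (g * x)" for x unfolding e_def by (simp add: norm_exp_eq_Re)
  have eadd: "e (x + y) = e x * e y" for x y unfolding e_def by (simp add: distrib_left exp_add)
  have "cmgf_hat (G \<star> H) g z = (\<integral>p. e (fst p + snd p) \<partial>(G \<Otimes>\<^sub>M H))"
    unfolding cmgf_hat_def convolution_def e_def[symmetric]
    by (subst integral_distr) (auto simp: case_prod_beta)
  also have "\<dots> = (\<integral>p. (\<lambda>x y. e x * e y) (fst p) (snd p) \<partial>(G \<Otimes>\<^sub>M H))" by (simp add: eadd)
  also have "\<dots> = integral\<^sup>L (G \<Otimes>\<^sub>M H) (case_prod (\<lambda>x y. e x * e y))"
    by (rule arg_cong[where f="integral\<^sup>L (G \<Otimes>\<^sub>M H)"]) (auto simp: fun_eq_iff)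
  also have "\<dots> = (\<integral>x. \<integral>y. e x * e y \<partial>H \<partial>G)"
  proof (rule integral_fst[symmetric])
    show "integrable (G \<Otimes>\<^sub>M H) (\<lambda>(x, y). e x * e y)"
    proof (rule integrableI_bounded)
      show "(\<lambda>(x, y). e x * e y) \<in> borel_measurable (G \<Otimes>\<^sub>M H)" by measurable
      have "(\<integral>\<^sup>+p. ennreal (norm ((\<lambda>(x, y). e x * e y) p)) \<partial>(G \<Otimes>\<^sub>M H)) =
          (\<integral>\<^sup>+x. \<integral>\<^sup>+y. ennreal (exp (g * x)) * ennreal (exp (g * y)) \<partial>H \<partial>G)"
      proof -
        have "(\<integral>\<^sup>+x. \<integral>\<^sup>+y. ennreal (exp (g * x)) * ennreal (exp (g * y)) \<partial>H \<partial>G) =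
          (\<integral>\<^sup>+x. \<integral>\<^sup>+y. (\<lambda>p. ennreal (norm ((\<lambda>(x, y). e x * e y) p))) (x, y) \<partial>H \<partial>G)"
          by (simp add: norm_mult ne ennreal_mult)
        also have "\<dots> = (\<integral>\<^sup>+p. ennreal (norm ((\<lambda>(x, y). e x * e y) p)) \<partial>(G \<Otimes>\<^sub>M H))"
          by (rule H.nn_integral_fst) measurable
        finally show ?thesis by simp
      qed
      also have "\<dots> = (\<integral>\<^sup>+x. ennreal (exp (g * x)) * mgf_hat H g \<partial>G)"
        unfolding mgf_hat_def by (subst nn_integral_cmult) auto
      also have "\<dots> = mgf_hat G g * mgf_hat H g"
        unfolding mgf_hat_def by (subst nn_integral_multc) auto
      finally show "(\<integral>\<^sup>+p. ennreal (norm ((\<lambda>(x, y). e x * e y) p)) \<partial>(G \<Otimes>\<^sub>M H)) < \<infinity>"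
        using mG mH by (simp add: ennreal_mult_less_top)
    qed
  qed
  also have "\<dots> = (\<integral>x. e x * cmgf_hat H g z \<partial>G)"
    unfolding cmgf_hat_def e_def by simp
  also have "\<dots> = cmgf_hat G g z * cmgf_hat H g z"
    unfolding cmgf_hat_def e_def by simp
  finally show ?thesis .
qed


theorem lemma5p2:
  fixes \<gamma> :: real and \<mu> :: "real measure"
  assumes "\<gamma> > 0" and "distr_on_R \<mu>" and "\<forall>x. tail \<mu> x > 0"
  shows "(\<forall>c>0. (mgf_hat \<mu> \<gamma> < \<infinity> \<and> (\<forall>z. cmgf_hat \<mu> \<gamma> z \<noteq> 0)) \<longleftrightarrow>
              (mgf_hat (mu_c \<gamma> c \<mu>) \<gamma> < \<infinity> \<and> (\<forall>z. cmgf_hat (mu_c \<gamma> c \<mu>) \<gamma> z \<noteq> 0)))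
       \<and> (\<forall>n::nat. class_S \<gamma> (conv_pow \<mu> n) \<longleftrightarrow> (\<forall>c>0. class_S \<gamma> (conv_pow (mu_c \<gamma> c \<mu>) n)))"
proof -
  have mu: "prob_space \<mu>" "sets \<mu> = sets borel" using assms(2) unfolding distr_on_R_def by auto
  have fmu: "finite_measure \<mu>" using mu(1) by (simp add: prob_space.finite_measure)
  have g0: "0 \<le> \<gamma>" using assms(1) by simp
  define F where "F c = density lborel (\<lambda>x. ennreal (f_c \<gamma> c x))" for c
  have muc: "mu_c \<gamma> c \<mu> = (F c \<star> \<mu>)" for c unfolding mu_c_def F_def ..
  have Fp: "prob_space (F c)" "sets (F c) = sets borel" "AE x in F c. x \<in> {0..c}" if "c > 0" for c
    unfolding F_def using Fc_props[OF assms(1) that] by auto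
  have part1: "\<forall>c>0. (mgf_hat \<mu> \<gamma> < \<infinity> \<and> (\<forall>z. cmgf_hat \<mu> \<gamma> z \<noteq> 0)) \<longleftrightarrow>
              (mgf_hat (mu_c \<gamma> c \<mu>) \<gamma> < \<infinity> \<and> (\<forall>z. cmgf_hat (mu_c \<gamma> c \<mu>) \<gamma> z \<noteq> 0))"
  proof (intro allI impI)
    fix c :: real assume c: "c > 0"
    note P = Fp[OF c]
    have fF: "finite_measure (F c)" using P(1) by (simp add: prob_space.finite_measure)
    have mF: "1 \<le> mgf_hat (F c) \<gamma>" "mgf_hat (F c) \<gamma> \<le> ennreal (exp (\<gamma> * c))"
      using mgf_bounds[OF P(1) P(2) P(3) g0] by auto
    have mF_fin: "mgf_hat (F c) \<gamma> < \<infinity>"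
      using mF(2) by (metis ennreal_less_top infinity_ennreal_def le_less_trans)
    have mF0: "mgf_hat (F c) \<gamma> \<noteq> 0" using mF(1) by auto
    have mc: "mgf_hat (mu_c \<gamma> c \<mu>) \<gamma> = mgf_hat (F c) \<gamma> * mgf_hat \<mu> \<gamma>"
      unfolding muc by (rule mgf_conv[OF fF fmu P(2) mu(2)])
    have fin_iff: "mgf_hat (mu_c \<gamma> c \<mu>) \<gamma> < \<infinity> \<longleftrightarrow> mgf_hat \<mu> \<gamma> < \<infinity>"
      unfolding mc using mF_fin mF0 by (auto simp: ennreal_mult_less_top less_top)
    have cm: "cmgf_hat (mu_c \<gamma> c \<mu>) \<gamma> z = cmgf_hat (F c) \<gamma> z * cmgf_hat \<mu> \<gamma> z"
      if "mgf_hat \<mu> \<gamma> < \<infinity>" for z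
      unfolding muc by (rule cmgf_conv[OF fF fmu P(2) mu(2) mF_fin that])
    have cF: "cmgf_hat (F c) \<gamma> z \<noteq> 0" for z
      unfolding F_def by (rule Fc_cmgf[OF assms(1) c])
    show "(mgf_hat \<mu> \<gamma> < \<infinity> \<and> (\<forall>z. cmgf_hat \<mu> \<gamma> z \<noteq> 0)) \<longleftrightarrow>
              (mgf_hat (mu_c \<gamma> c \<mu>) \<gamma> < \<infinity> \<and> (\<forall>z. cmgf_hat (mu_c \<gamma> c \<mu>) \<gamma> z \<noteq> 0))"
      using fin_iff cm cF by auto
  qed
  have part2: "\<forall>n::nat. class_S \<gamma> (conv_pow \<mu> n) \<longleftrightarrow> (\<forall>c>0. class_S \<gamma> (conv_pow (mu_c \<gamma> c \<mu>) n))"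
  proof
    fix n :: nat
    show "class_S \<gamma> (conv_pow \<mu> n) \<longleftrightarrow> (\<forall>c>0. class_S \<gamma> (conv_pow (mu_c \<gamma> c \<mu>) n))"
    proof (cases "n = 0")
      case True
      have t0: "tail (return borel (0::real)) 0 = 0"
        unfolding tail_def by (simp add: measure_return indicator_def)
      have nS: "\<not> class_S \<gamma> (return borel 0)"
      proof
        assume "class_S \<gamma> (return borel 0)"
        then have "tail (return borel (0::real)) 0 > 0" unfolding class_S_def class_L_def by blast
        then show False using t0 by simp
      qed
      show ?thesis using True nS by (auto intro!: exI[of _ 1])
    next
      case False
      define H where "H = conv_pow \<mu> n"
      have Hp: "prob_space H" "sets H = sets borel"
        unfolding H_def using conv_pow_prob[OF mu] by auto
      have eq: "conv_pow (mu_c \<gamma> c \<mu>) n = (conv_pow (F c) n \<star> H)" if "c > 0" for c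
        unfolding muc H_def using Fp[OF that] mu by (intro conv_pow_conv) auto
      have Gp: "prob_space (conv_pow (F c) n)" "sets (conv_pow (F c) n) = sets borel"
          "AE x in conv_pow (F c) n. x \<in> {0..real n * c}" if "c > 0" for c
        using conv_pow_prob[OF Fp(1,2)[OF that]] conv_pow_supp[OF Fp[OF that]] by auto
      show ?thesis unfolding H_def[symmetric]
      proof
        assume S: "class_S \<gamma> H"
        show "\<forall>c>0. class_S \<gamma> (conv_pow (mu_c \<gamma> c \<mu>) n)"
        proof (intro allI impI)
          fix c :: real assume c: "c > 0"
          show "class_S \<gamma> (conv_pow (mu_c \<gamma> c \<mu>) n)"
            unfolding eq[OF c] by (rule classS_forward[OF Gp(1)[OF c] Hp(1) Gp(2)[OF c] Hp(2) Gp(3)[OF c] g0 S])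
        qed
      next
        assume R: "\<forall>c>0. class_S \<gamma> (conv_pow (mu_c \<gamma> c \<mu>) n)"
        show "class_S \<gamma> H"
        proof (rule classS_backward[OF Hp g0])
          fix K :: real assume K: "K > 0"
          define c where "c = K / real n"
          have c: "c > 0" unfolding c_def using K False by simp
          have nc: "real n * c = K" unfolding c_def using False by simp
          show "\<exists>G. prob_space G \<and> sets G = sets borel \<and> (AE y in G. y \<in> {0..K}) \<and> class_S \<gamma> (G \<star> H)"
            using Gp[OF c] R c eq[OF c] unfolding nc by (intro exI[of _ "conv_pow (F c) n"]) auto
        qed
      qed
    qed
  qed
  show ?thesis using part1 part2 by blast
qed

end
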